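(* Let $\mathcal{G}$ be a MAG and let $H_1,H_2,H$ be heads with maximal vertex $i$ such that $H_1\to^KH$ and $H_2\to^LH$ for some $K,L$. Then $H_3=\mathrm{barren}(H_1\cup H_2)$ is a head and $H_3\to^{K'}H$ for $K'=H_3\setminus H$.
   Context: A MAG is an acyclic directed mixed graph (directed and bidirected edges, no directed cycles) with $\mathrm{sib}(v)\cap\mathrm{an}(v)=\emptyset$ for all $v$ and in which every nonadjacent pair is m-separated by some set. Vertices are numbered topologically. $\mathrm{barren}_{\mathcal{G}'}(W)=\{w\in W:\mathrm{de}_{\mathcal{G}'}(w)\cap W=\{w\}\}$ (with $\mathrm{barren}=\mathrm{barren}_{\mathcal{G}}$); a nonempty $H$ is a head if $\mathrm{barren}(H)=H$ and $H$ lies in one district (bidirected-connected component) of $\mathcal{G}_{\mathrm{an}(H)}$. For a head $H$ with maximal vertex $i$ and $\emptyset\ne K\subseteq H\setminus\{i\}$, $H\to^KH'$ means $H'=\mathrm{barren}_{\mathcal{G}'}(\mathrm{dis}_{\mathcal{G}'}(i))$ where $\mathcal{G}'=\mathcal{G}_{\mathrm{an}(H)\setminus K}$. *)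

theory Defs
  imports Main
begin

text \<open>Mixed graphs on natural-number vertices: directed edges (a,b) mean a \<rightarrow> b;
  bidirected edges are stored as a symmetric relation.\<close>

record mgraph =
  verts  :: "nat set"
  dedges :: "(nat \<times> nat) set"
  bedges :: "(nat \<times> nat) set"

definition induced :: "mgraph \<Rightarrow> nat set \<Rightarrow> mgraph" where
  "induced G A = \<lparr> verts = verts G \<inter> A,
                    dedges = dedges G \<inter> (A \<times> A),
                    bedges = bedges G \<inter> (A \<times> A) \<rparr>"

definition anc :: "mgraph \<Rightarrow> nat \<Rightarrow> nat set" where
  "anc G v = {u \<in> verts G. (u, v) \<in> (dedges G)\<^sup>*}"

definition anc_set :: "mgraph \<Rightarrow> nat set \<Rightarrow> nat set" where
  "anc_set G W = (\<Union>w\<in>W. anc G w)"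

definition desc :: "mgraph \<Rightarrow> nat \<Rightarrow> nat set" where
  "desc G v = {u \<in> verts G. (v, u) \<in> (dedges G)\<^sup>*}"

definition sib :: "mgraph \<Rightarrow> nat \<Rightarrow> nat set" where
  "sib G v = {u. (u, v) \<in> bedges G}"

definition barren :: "mgraph \<Rightarrow> nat set \<Rightarrow> nat set" where
  "barren G W = {w \<in> W. desc G w \<inter> W = {w}}"

definition dis :: "mgraph \<Rightarrow> nat \<Rightarrow> nat set" where
  "dis G v = {u \<in> verts G. (u, v) \<in> (bedges G)\<^sup>*}"

definition adjacent :: "mgraph \<Rightarrow> nat \<Rightarrow> nat \<Rightarrow> bool" where
  "adjacent G a b \<longleftrightarrow> (a, b) \<in> dedges G \<or> (b, a) \<in> dedges G \<or> (a, b) \<in> bedges G"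

text \<open>Edge kinds on a path, read from vertex vs!j to vs!(j+1).\<close>
datatype ekind = Fwd | Bwd | Bid

definition edge_ok :: "mgraph \<Rightarrow> nat \<Rightarrow> ekind \<Rightarrow> nat \<Rightarrow> bool" where
  "edge_ok G u k v = (case k of Fwd \<Rightarrow> (u, v) \<in> dedges G
                              | Bwd \<Rightarrow> (v, u) \<in> dedges G
                              | Bid \<Rightarrow> (u, v) \<in> bedges G)"

definition head_at_end :: "ekind \<Rightarrow> bool" where
  "head_at_end k \<longleftrightarrow> k = Fwd \<or> k = Bid"

definition head_at_start :: "ekind \<Rightarrow> bool" where
  "head_at_start k \<longleftrightarrow> k = Bwd \<or> k = Bid"

definition is_path :: "mgraph \<Rightarrow> nat list \<Rightarrow> ekind list \<Rightarrow> bool" where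
  "is_path G vs es \<longleftrightarrow> length vs = Suc (length es) \<and> distinct vs \<and> set vs \<subseteq> verts G \<and>
     (\<forall>j < length es. edge_ok G (vs ! j) (es ! j) (vs ! Suc j))"

definition collider :: "ekind list \<Rightarrow> nat \<Rightarrow> bool" where
  "collider es j \<longleftrightarrow> head_at_end (es ! (j - 1)) \<and> head_at_start (es ! j)"

definition m_connecting :: "mgraph \<Rightarrow> nat set \<Rightarrow> nat list \<Rightarrow> ekind list \<Rightarrow> bool" where
  "m_connecting G Z vs es \<longleftrightarrow> is_path G vs es \<and>
     (\<forall>j. 0 < j \<and> j < length es \<longrightarrow>
        (if collider es j then vs ! j \<in> anc_set G Z else vs ! j \<notin> Z))"

definition m_separated :: "mgraph \<Rightarrow> nat \<Rightarrow> nat \<Rightarrow> nat set \<Rightarrow> bool" where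
  "m_separated G a b Z \<longleftrightarrow>
     \<not> (\<exists>vs es. m_connecting G Z vs es \<and> hd vs = a \<and> last vs = b)"

text \<open>A MAG whose vertices are numbered topologically (directed edges go upward).\<close>
definition MAG :: "mgraph \<Rightarrow> bool" where
  "MAG G \<longleftrightarrow> finite (verts G) \<and>
     dedges G \<subseteq> verts G \<times> verts G \<and> bedges G \<subseteq> verts G \<times> verts G \<and>
     sym (bedges G) \<and> irrefl (bedges G) \<and>
     (\<forall>a b. (a, b) \<in> dedges G \<longrightarrow> a < b) \<and>
     (\<forall>v \<in> verts G. sib G v \<inter> anc G v = {}) \<and>
     (\<forall>a \<in> verts G. \<forall>b \<in> verts G. a \<noteq> b \<and> \<not> adjacent G a b \<longrightarrow>
        (\<exists>Z. Z \<subseteq> verts G - {a, b} \<and> m_separated G a b Z))"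

definition head :: "mgraph \<Rightarrow> nat set \<Rightarrow> bool" where
  "head G H \<longleftrightarrow> H \<noteq> {} \<and> barren G H = H \<and>
     (\<exists>v \<in> H. H \<subseteq> dis (induced G (anc_set G H)) v)"

text \<open>H \<rightarrow>^K H' ; the maximal vertex of H is Max H (topological numbering).\<close>
definition head_step :: "mgraph \<Rightarrow> nat set \<Rightarrow> nat set \<Rightarrow> nat set \<Rightarrow> bool" where
  "head_step G H K H' \<longleftrightarrow> head G H \<and> K \<noteq> {} \<and> K \<subseteq> H - {Max H} \<and>
     (let G' = induced G (anc_set G H - K) in H' = barren G' (dis G' (Max H)))"

end

theory Submission
  imports Defs
begin

definition closedS :: "mgraph \<Rightarrow> nat set \<Rightarrow> bool" where
  "closedS G S \<longleftrightarrow> (\<forall>x y. (x, y) \<in> dedges G \<longrightarrow> y \<in> S \<longrightarrow> x \<in> S)"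

lemma mag_le:
  assumes "MAG G" "(a, b) \<in> (dedges G)\<^sup>*" shows "a \<le> b"
  using assms(2)
proof (induction rule: rtrancl_induct)
  case base then show ?case by simp
next
  case (step y z)
  then have "y < z" using assms(1) by (auto simp: MAG_def)
  then show ?case using step by simp
qed

lemma rt_verts:
  assumes "MAG G" "(a, b) \<in> (dedges G)\<^sup>*" "b \<in> verts G" shows "a \<in> verts G"
  using assms(2,3)
proof (induction rule: converse_rtrancl_induct)
  case base then show ?case by simp
next
  case (step y z)
  then show ?case using assms(1) by (auto simp: MAG_def)
qed

lemma anc_set_iff:
  "u \<in> anc_set G W \<longleftrightarrow> u \<in> verts G \<and> (\<exists>w\<in>W. (u, w) \<in> (dedges G)\<^sup>*)"
  by (auto simp: anc_set_def anc_def)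

lemma barren_sub: "barren G W \<subseteq> verts G \<inter> W"
  by (auto simp: barren_def desc_def)

lemma barren_iff:
  assumes "W \<subseteq> verts G"
  shows "w \<in> barren G W \<longleftrightarrow> w \<in> W \<and> (\<forall>u\<in>W. (w, u) \<in> (dedges G)\<^sup>* \<longrightarrow> u = w)"
  using assms by (auto simp: barren_def desc_def)

lemma closed_rt:
  assumes "closedS G S" "(x, y) \<in> (dedges G)\<^sup>*" "y \<in> S" shows "x \<in> S"
  using assms(2,3)
proof (induction rule: converse_rtrancl_induct)
  case base then show ?case by simp
next
  case (step y z)
  then show ?case using assms(1) by (auto simp: closedS_def)
qed

lemma closed_rt_induced:
  assumes "closedS G S" "(x, y) \<in> (dedges G)\<^sup>*" "y \<in> S"
  shows "(x, y) \<in> (dedges G \<inter> S \<times> S)\<^sup>*"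
  using assms(2)
proof (induction rule: converse_rtrancl_induct)
  case base then show ?case by simp
next
  case (step x z)
  have "z \<in> S" using closed_rt[OF assms(1) step(2) assms(3)] .
  moreover have "x \<in> S" using assms(1) step(1) \<open>z \<in> S\<close> by (auto simp: closedS_def)
  ultimately have "(x, z) \<in> dedges G \<inter> S \<times> S" using step(1) by simp
  then show ?case using step(3) by (rule converse_rtrancl_into_rtrancl)
qed

lemma barren_induced:
  assumes "closedS G S" "W \<subseteq> S"
  shows "barren (induced G S) W = barren G W"
proof -
  have "desc (induced G S) w \<inter> W = desc G w \<inter> W" for w
  proof
    show "desc (induced G S) w \<inter> W \<subseteq> desc G w \<inter> W"
      by (auto simp: desc_def induced_def dest: rtrancl_mono[of "dedges G \<inter> S \<times> S" "dedges G", THEN subsetD, rotated])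
    show "desc G w \<inter> W \<subseteq> desc (induced G S) w \<inter> W"
      using assms closed_rt_induced[OF assms(1)] by (auto simp: desc_def induced_def)
  qed
  moreover have "w \<in> W \<Longrightarrow> w \<in> desc (induced G S) w \<longleftrightarrow> w \<in> desc G w" for w
    using assms by (auto simp: desc_def induced_def)
  ultimately show ?thesis unfolding barren_def by auto
qed

lemma anc_set_closed:
  assumes "MAG G" shows "closedS G (anc_set G W)"
  unfolding closedS_def anc_set_iff using assms
  by (auto simp: MAG_def intro: converse_rtrancl_into_rtrancl)

lemma anc_set_closed_sub:
  assumes "closedS G S" "W \<subseteq> S" "S \<subseteq> verts G"
  shows "anc_set G W \<subseteq> S"
  using assms closed_rt[OF assms(1)] by (force simp: anc_set_iff)

lemma closed_diff:
  assumes "closedS G A" "\<forall>w\<in>W. \<forall>y\<in>A. (w, y) \<in> (dedges G)\<^sup>* \<longrightarrow> y = w"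
  shows "closedS G (A - W)"
  using assms unfolding closedS_def by blast

lemma sink_barren:
  assumes "MAG G" "barren G W = W" "w \<in> W" "y \<in> anc_set G W" "(w, y) \<in> (dedges G)\<^sup>*"
  shows "y = w"
proof -
  obtain h where h: "h \<in> W" "(y, h) \<in> (dedges G)\<^sup>*" using assms(4) by (auto simp: anc_set_iff)
  have WV: "W \<subseteq> verts G" using barren_sub[of G W] assms(2) by auto
  have "(w, h) \<in> (dedges G)\<^sup>*" using assms(5) h(2) by simp
  then have "h = w" using assms(2,3) h(1) barren_iff[OF WV, of w] by auto
  then show ?thesis using mag_le[OF assms(1) assms(5)] mag_le[OF assms(1) h(2)] by simp
qed

lemma barren_exists:
  assumes "MAG G" "W \<subseteq> verts G" "w \<in> W"
  shows "\<exists>u\<in>barren G W. (w, u) \<in> (dedges G)\<^sup>*"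
proof -
  define M where "M = {u \<in> W. (w, u) \<in> (dedges G)\<^sup>*}"
  have fin: "finite M" using assms(1,2) finite_subset[of M "verts G"] by (auto simp: MAG_def M_def)
  have ne: "w \<in> M" using assms by (simp add: M_def)
  define u where "u = Max M"
  have uM: "u \<in> M" using Max_in[OF fin] ne u_def by auto
  have "u \<in> barren G W"
  proof (subst barren_iff[OF assms(2)], intro conjI ballI impI)
    show "u \<in> W" using uM by (simp add: M_def)
    fix x assume "x \<in> W" "(u, x) \<in> (dedges G)\<^sup>*"
    then have "x \<in> M" using uM by (auto simp: M_def)
    then have "x \<le> u" using Max_ge[OF fin] u_def by simp
    then show "x = u" using mag_le[OF assms(1) \<open>(u, x) \<in> _\<close>] by simp
  qed
  then show ?thesis using uM by (auto simp: M_def)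
qed

lemma barren_barren: "barren G (barren G W) = barren G W"
  unfolding barren_def by blast

lemma anc_set_Un: "anc_set G (X \<union> Y) = anc_set G X \<union> anc_set G Y"
  by (auto simp: anc_set_def)

lemma anc_set_barren:
  assumes "MAG G" "W \<subseteq> verts G"
  shows "anc_set G (barren G W) = anc_set G W"
proof
  show "anc_set G (barren G W) \<subseteq> anc_set G W"
    using barren_sub[of G W] by (force simp: anc_set_iff)
  show "anc_set G W \<subseteq> anc_set G (barren G W)"
  proof
    fix x assume "x \<in> anc_set G W"
    then obtain w where w: "x \<in> verts G" "w \<in> W" "(x, w) \<in> (dedges G)\<^sup>*" by (auto simp: anc_set_iff)
    obtain u where "u \<in> barren G W" "(w, u) \<in> (dedges G)\<^sup>*" using barren_exists[OF assms w(2)] by blast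
    then show "x \<in> anc_set G (barren G W)" using w by (auto simp: anc_set_iff intro: rtrancl_trans)
  qed
qed

lemma dis_induced:
  "dis (induced G S) v = {u \<in> verts G \<inter> S. (u, v) \<in> (bedges G \<inter> S \<times> S)\<^sup>*}"
  by (simp add: dis_def induced_def)

lemma dis_mono:
  assumes "S \<subseteq> T" shows "dis (induced G S) v \<subseteq> dis (induced G T) v"
proof -
  have "bedges G \<inter> S \<times> S \<subseteq> bedges G \<inter> T \<times> T" using assms by auto
  then show ?thesis unfolding dis_induced using assms rtrancl_mono by blast
qed

lemma dis_eq:
  assumes "MAG G" "v \<in> dis (induced G S) v" "dis (induced G S) v \<subseteq> T" "T \<subseteq> S"
  shows "dis (induced G T) v = dis (induced G S) v"
proof
  show "dis (induced G T) v \<subseteq> dis (induced G S) v" using dis_mono[OF assms(4)] .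
  have BV: "bedges G \<subseteq> verts G \<times> verts G" using assms(1) by (simp add: MAG_def)
  have "(x, v) \<in> (bedges G \<inter> T \<times> T)\<^sup>*" if "(x, v) \<in> (bedges G \<inter> S \<times> S)\<^sup>*" for x
    using that
  proof (induction rule: converse_rtrancl_induct)
    case base then show ?case by simp
  next
    case (step x y)
    have "x \<in> dis (induced G S) v" using step(1,2) BV unfolding dis_induced
      by (auto intro: converse_rtrancl_into_rtrancl)
    moreover have "y \<in> dis (induced G S) v" using step(1,2) BV unfolding dis_induced by auto
    ultimately have "x \<in> T" "y \<in> T" using assms(3) by auto
    then have "(x, y) \<in> bedges G \<inter> T \<times> T" using step(1) by simp
    then show ?case using step(3) by (rule converse_rtrancl_into_rtrancl)
  qed
  then show "dis (induced G S) v \<subseteq> dis (induced G T) v"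
    using assms(3) unfolding dis_induced by auto
qed

lemma head_props:
  assumes "MAG G" "head G H"
  shows "H \<subseteq> verts G" "finite H" "H \<noteq> {}" "barren G H = H"
proof -
  show b: "barren G H = H" "H \<noteq> {}" using assms by (auto simp: head_def)
  show V: "H \<subseteq> verts G" using barren_sub[of G H] b by auto
  show "finite H" using V assms(1) finite_subset by (auto simp: MAG_def)
qed

lemma head_dis:
  assumes "MAG G" "head G H" "x \<in> H"
  shows "H \<subseteq> dis (induced G (anc_set G H)) x"
proof -
  define R where "R = bedges G \<inter> anc_set G H \<times> anc_set G H"
  obtain v where v: "v \<in> H" "H \<subseteq> dis (induced G (anc_set G H)) v" using assms(2) by (auto simp: head_def)
  have symR: "sym R" using assms(1) by (auto simp: R_def MAG_def sym_def)
  have "(x, v) \<in> R\<^sup>*" using v assms(3) unfolding dis_induced R_def by auto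
  then have xv: "(v, x) \<in> R\<^sup>*" using symR sym_rtrancl[of R] by (auto simp: sym_def)
  show ?thesis
  proof
    fix h assume "h \<in> H"
    then have "h \<in> verts G \<inter> anc_set G H" "(h, v) \<in> R\<^sup>*" using v unfolding dis_induced R_def by auto
    then show "h \<in> dis (induced G (anc_set G H)) x" using xv unfolding dis_induced R_def by auto
  qed
qed

theorem propositionC6:
  fixes G :: mgraph and H1 H2 H :: "nat set" and i :: nat
  assumes "MAG G"
    and "head G H1" and "head G H2" and "head G H"
    and "Max H1 = i" and "Max H2 = i" and "Max H = i"
    and "\<exists>K. head_step G H1 K H"
    and "\<exists>L. head_step G H2 L H"
  shows "head G (barren G (H1 \<union> H2)) \<and>
         head_step G (barren G (H1 \<union> H2)) (barren G (H1 \<union> H2) - H) H"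
proof -
  note M = assms(1)
  obtain K where hK: "head_step G H1 K H" using assms(8) by blast
  obtain L where hL: "head_step G H2 L H" using assms(9) by blast
  define A1 where "A1 = anc_set G H1"
  define A2 where "A2 = anc_set G H2"
  define S1 where "S1 = A1 - K"
  define S2 where "S2 = A2 - L"
  define D1 where "D1 = dis (induced G S1) i"
  define D2 where "D2 = dis (induced G S2) i"
  define H3 where "H3 = barren G (H1 \<union> H2)"
  define A where "A = anc_set G H3"
  define S3 where "S3 = A - (H3 - H)"
  define D3 where "D3 = dis (induced G S3) i"
  define AH where "AH = anc_set G H"
  have VE: "dedges G \<subseteq> verts G \<times> verts G" and VB: "bedges G \<subseteq> verts G \<times> verts G"
    and finV: "finite (verts G)" using M by (auto simp: MAG_def)
  have K: "K \<noteq> {}" "K \<subseteq> H1 - {i}" "H = barren (induced G S1) D1"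
    using hK assms(5) by (auto simp: head_step_def Let_def S1_def A1_def D1_def)
  have L: "L \<noteq> {}" "L \<subseteq> H2 - {i}" "H = barren (induced G S2) D2"
    using hL assms(6) by (auto simp: head_step_def Let_def S2_def A2_def D2_def)
  note h1 = head_props[OF M assms(2)] and h2 = head_props[OF M assms(3)]
  have iH1: "i \<in> H1" using Max_in[OF h1(2,3)] assms(5) by simp
  have iH2: "i \<in> H2" using Max_in[OF h2(2,3)] assms(6) by simp
  have H12V: "H1 \<union> H2 \<subseteq> verts G" using h1 h2 by auto
  have AU: "A = A1 \<union> A2" unfolding A_def H3_def A1_def A2_def
    using anc_set_barren[OF M H12V] anc_set_Un by simp
  have le_i: "x \<le> i" if "x \<in> A" for x
  proof -
    have "x \<in> anc_set G (H1 \<union> H2)" using that AU anc_set_Un unfolding A1_def A2_def by simp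
    then obtain h where h: "h \<in> H1 \<union> H2" "(x, h) \<in> (dedges G)\<^sup>*"
      by (auto simp: anc_set_iff)
    have "h \<le> i" using h(1) Max_ge[OF h1(2)] Max_ge[OF h2(2)] assms(5,6) by auto
    then show ?thesis using mag_le[OF M h(2)] by simp
  qed
  have cA1: "closedS G A1" and cA2: "closedS G A2" and cA: "closedS G A"
    unfolding A1_def A2_def A_def by (rule anc_set_closed[OF M])+
  have sinkK: "\<forall>w\<in>K. \<forall>y\<in>A1. (w, y) \<in> (dedges G)\<^sup>* \<longrightarrow> y = w"
    using sink_barren[OF M h1(4)] K(2) unfolding A1_def by blast
  have sinkL: "\<forall>w\<in>L. \<forall>y\<in>A2. (w, y) \<in> (dedges G)\<^sup>* \<longrightarrow> y = w"
    using sink_barren[OF M h2(4)] L(2) unfolding A2_def by blast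
  have cS1: "closedS G S1" unfolding S1_def using closed_diff[OF cA1 sinkK] .
  have cS2: "closedS G S2" unfolding S2_def using closed_diff[OF cA2 sinkL] .
  have A1V: "A1 \<subseteq> verts G" and A2V: "A2 \<subseteq> verts G" and AV: "A \<subseteq> verts G"
    unfolding A1_def A2_def A_def by (auto simp: anc_set_iff)
  have D1S: "D1 \<subseteq> S1" and D2S: "D2 \<subseteq> S2" unfolding D1_def D2_def dis_induced by auto
  have HD1: "H = barren G D1" using K(3) barren_induced[OF cS1 D1S] by simp
  have HD2: "H = barren G D2" using L(3) barren_induced[OF cS2 D2S] by simp
  have iV: "i \<in> verts G" using iH1 h1(1) by auto
  have iA1: "i \<in> A1" using iH1 iV unfolding A1_def by (auto simp: anc_set_iff)
  have iA2: "i \<in> A2" using iH2 iV unfolding A2_def by (auto simp: anc_set_iff)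
  have iD1: "i \<in> D1" using iA1 K(2) iV unfolding D1_def dis_induced S1_def by auto
  have iD2: "i \<in> D2" using iA2 L(2) iV unfolding D2_def dis_induced S2_def by auto
  have D1V: "D1 \<subseteq> verts G" and D2V: "D2 \<subseteq> verts G" unfolding D1_def D2_def dis_induced by auto
  have HsD1: "H \<subseteq> D1" using HD1 barren_sub[of G D1] by auto
  have iH: "i \<in> H"
  proof -
    have "\<forall>u\<in>D1. (i, u) \<in> (dedges G)\<^sup>* \<longrightarrow> u = i"
    proof (intro ballI impI)
      fix u assume "u \<in> D1" "(i, u) \<in> (dedges G)\<^sup>*"
      then have "u \<in> A" using D1S AU unfolding S1_def by auto
      then show "u = i" using le_i mag_le[OF M \<open>(i, u) \<in> _\<close>] by force
    qed
    then show ?thesis using HD1 barren_iff[OF D1V] iD1 by simp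
  qed
  have HV: "H \<subseteq> verts G" using HsD1 D1V by auto
  have S1V: "S1 \<subseteq> verts G" using A1V unfolding S1_def by blast
  have S2V: "S2 \<subseteq> verts G" using A2V unfolding S2_def by blast
  have HS1: "H \<subseteq> S1" using HsD1 D1S by (rule subset_trans)
  have HsD2: "H \<subseteq> D2" using HD2 barren_sub[of G D2] by auto
  have HS2: "H \<subseteq> S2" using HsD2 D2S by (rule subset_trans)
  have AHS1: "AH \<subseteq> S1" unfolding AH_def by (rule anc_set_closed_sub[OF cS1 HS1 S1V])
  have AHS2: "AH \<subseteq> S2" unfolding AH_def by (rule anc_set_closed_sub[OF cS2 HS2 S2V])
  have D1AH: "D1 \<subseteq> AH"
  proof
    fix d assume "d \<in> D1"
    then obtain u where "u \<in> H" "(d, u) \<in> (dedges G)\<^sup>*" using barren_exists[OF M D1V] HD1 by blast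
    then show "d \<in> AH" using \<open>d \<in> D1\<close> D1V unfolding AH_def by (auto simp: anc_set_iff)
  qed
  have D2AH: "D2 \<subseteq> AH"
  proof
    fix d assume "d \<in> D2"
    then obtain u where "u \<in> H" "(d, u) \<in> (dedges G)\<^sup>*" using barren_exists[OF M D2V] HD2 by blast
    then show "d \<in> AH" using \<open>d \<in> D2\<close> D2V unfolding AH_def by (auto simp: anc_set_iff)
  qed
  have D1eq: "dis (induced G AH) i = D1"
    using dis_eq[OF M _ _ AHS1] iD1 D1AH unfolding D1_def by blast
  have D2eq: "dis (induced G AH) i = D2"
    using dis_eq[OF M _ _ AHS2] iD2 D2AH unfolding D2_def by blast
  have D12: "D1 = D2" using D1eq D2eq by simp
  have H3sub: "H3 \<subseteq> H1 \<union> H2" using barren_sub[of G "H1 \<union> H2"] unfolding H3_def by auto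
  have H3b: "barren G H3 = H3" unfolding H3_def by (rule barren_barren)
  have Aeq: "A = anc_set G (H1 \<union> H2)" unfolding A_def H3_def using anc_set_barren[OF M H12V] .
  have H12A: "H1 \<union> H2 \<subseteq> A"
  proof
    fix x assume "x \<in> H1 \<union> H2"
    then have "x \<in> verts G" "(x, x) \<in> (dedges G)\<^sup>*" using H12V by auto
    then show "x \<in> A" unfolding Aeq anc_set_iff using \<open>x \<in> H1 \<union> H2\<close> by blast
  qed
  have iH3: "i \<in> H3"
  proof -
    have "\<forall>u\<in>H1 \<union> H2. (i, u) \<in> (dedges G)\<^sup>* \<longrightarrow> u = i"
    proof (intro ballI impI)
      fix u assume "u \<in> H1 \<union> H2" "(i, u) \<in> (dedges G)\<^sup>*"
      then have "u \<le> i" "i \<le> u" using le_i H12A mag_le[OF M] by auto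
      then show "u = i" by simp
    qed
    then show ?thesis using barren_iff[OF H12V] iH1 unfolding H3_def by simp
  qed
  have finH3: "finite H3" using H3sub h1(2) h2(2) finite_subset by blast
  have maxH3: "Max H3 = i"
    by (rule Max_eqI[OF finH3 _ iH3]) (use H3sub H12A le_i in blast)
  have sink3: "\<forall>w\<in>H3 - H. \<forall>y\<in>A. (w, y) \<in> (dedges G)\<^sup>* \<longrightarrow> y = w"
    using sink_barren[OF M H3b] unfolding A_def by blast
  have cS3: "closedS G S3" unfolding S3_def using closed_diff[OF cA sink3] .
  have AHS3: "AH \<subseteq> S3"
  proof
    fix x assume "x \<in> AH"
    then obtain h where h: "h \<in> H" "(x, h) \<in> (dedges G)\<^sup>*" "x \<in> verts G" unfolding AH_def by (auto simp: anc_set_iff)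
    have xA: "x \<in> A" using \<open>x \<in> AH\<close> AHS1 AU unfolding S1_def by auto
    have hA: "h \<in> A" using h(1) HsD1 D1S AU unfolding S1_def by auto
    have "x \<notin> H3 - H"
    proof
      assume "x \<in> H3 - H"
      then have "h = x" using sink_barren[OF M H3b _ _ h(2)] hA unfolding A_def by blast
      then show False using h(1) \<open>x \<in> H3 - H\<close> by simp
    qed
    then show "x \<in> S3" using xA unfolding S3_def by simp
  qed
  have D1D3: "D1 \<subseteq> D3" using dis_mono[OF AHS3, of G i] D1eq unfolding D3_def by simp
  have D3D1: "D3 \<subseteq> D1"
  proof
    fix u assume "u \<in> D3"
    then have "(u, i) \<in> (bedges G \<inter> S3 \<times> S3)\<^sup>*" unfolding D3_def dis_induced by simp
    then show "u \<in> D1"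
    proof (induction rule: converse_rtrancl_induct)
      case base then show ?case using iD1 .
    next
      case (step x y)
      have xS3: "x \<in> S3" and xyB: "(x, y) \<in> bedges G" and yD1: "y \<in> D1"
        using step by auto
      have xV: "x \<in> verts G" using xyB VB by auto
      have yD2: "y \<in> D2" using yD1 D12 by simp
      show ?case
      proof (cases "x \<in> S1")
        case True
        have "(y, i) \<in> (bedges G \<inter> S1 \<times> S1)\<^sup>*" using yD1 unfolding D1_def dis_induced by simp
        moreover have "(x, y) \<in> bedges G \<inter> S1 \<times> S1" using True xyB yD1 D1S by auto
        ultimately show ?thesis using True xV unfolding D1_def dis_induced
          by (auto intro: converse_rtrancl_into_rtrancl)
      next
        case nS1: False
        show ?thesis
        proof (cases "x \<in> S2")
          case True
          have "(y, i) \<in> (bedges G \<inter> S2 \<times> S2)\<^sup>*" using yD2 unfolding D2_def dis_induced by simp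
          moreover have "(x, y) \<in> bedges G \<inter> S2 \<times> S2" using True xyB yD2 D2S by auto
          ultimately have "x \<in> D2" using True xV unfolding D2_def dis_induced
            by (auto intro: converse_rtrancl_into_rtrancl)
          then show ?thesis using D12 by simp
        next
          case nS2: False
          have xA: "x \<in> A" using xS3 unfolding S3_def by simp
          have c1: "x \<in> A1 \<Longrightarrow> x \<in> K" using nS1 unfolding S1_def by simp
          have c2: "x \<in> A2 \<Longrightarrow> x \<in> L" using nS2 unfolding S2_def by simp
          have xH12: "x \<in> H1 \<union> H2" using xA AU c1 c2 K(2) L(2) by auto
          show ?thesis
          proof (cases "x \<in> H")
            case True then show ?thesis using HsD1 by auto
          next
            case False
            then have "x \<notin> H3" using xS3 unfolding S3_def by simp
            then obtain h where h: "h \<in> H1 \<union> H2" "(x, h) \<in> (dedges G)\<^sup>*" "h \<noteq> x"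
              using barren_iff[OF H12V, of x] xH12 unfolding H3_def by blast
            show ?thesis
            proof (cases "h \<in> H1")
              case True
              then have "x \<in> A1" using h(2) xV unfolding A1_def by (auto simp: anc_set_iff)
              then have "x \<in> H1" using c1 K(2) by auto
              then show ?thesis using barren_iff[OF h1(1), of x] h1(4) h True by blast
            next
              case False
              then have hH2: "h \<in> H2" using h(1) by simp
              then have "x \<in> A2" using h(2) xV unfolding A2_def by (auto simp: anc_set_iff)
              then have "x \<in> H2" using c2 L(2) by auto
              then show ?thesis using barren_iff[OF h2(1), of x] h2(4) h hH2 by blast
            qed
          qed
        qed
      qed
    qed
  qed
  have D3eq: "D3 = D1" using D1D3 D3D1 by simp
  have D3S: "D3 \<subseteq> S3" unfolding D3_def dis_induced by auto
  have Hfin: "H = barren (induced G S3) D3"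
    using barren_induced[OF cS3 D3S] HD1 D3eq by simp
  have Kne: "H3 - H \<noteq> {}"
  proof -
    obtain k where k: "k \<in> K" using K(1) by blast
    have "k \<in> H1 \<union> H2" using k K(2) by auto
    then obtain u where u: "u \<in> H3" "(k, u) \<in> (dedges G)\<^sup>*"
      using barren_exists[OF M H12V] unfolding H3_def by blast
    have "u \<notin> H"
    proof
      assume "u \<in> H"
      then have "k \<in> AH" using u(2) H12V \<open>k \<in> H1 \<union> H2\<close> unfolding AH_def by (auto simp: anc_set_iff)
      then show False using AHS1 k unfolding S1_def by auto
    qed
    then show ?thesis using u(1) by blast
  qed
  have headH3: "head G H3"
  proof -
    have "H1 \<subseteq> dis (induced G A) i"
      using head_dis[OF M assms(2) iH1] dis_mono[of A1 A G i] AU unfolding A1_def by auto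
    moreover have "H2 \<subseteq> dis (induced G A) i"
      using head_dis[OF M assms(3) iH2] dis_mono[of A2 A G i] AU unfolding A2_def by auto
    ultimately have "H3 \<subseteq> dis (induced G (anc_set G H3)) i" using H3sub unfolding A_def by blast
    then show ?thesis unfolding head_def using iH3 H3b by blast
  qed
  have "head_step G H3 (H3 - H) H"
    unfolding head_step_def Let_def
    using headH3 Kne iH maxH3 Hfin unfolding S3_def A_def D3_def by auto
  then show ?thesis using headH3 unfolding H3_def by simp
qed

end
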